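(* Assume the payoffs are normalized with $T=1$, $S=0$. Let $\mathbf p=(p_1,p_2,p_3,p_4)$ be a firm memory-one strategy for X. Then $\mathbf p$ is strictly firm if and only if $$p_3<\frac{P}{R-P}(1-p_1)\qquad\text{and}\qquad p_3<\frac{P}{1-P}(1-p_2).$$ Moreover, if the X Press-Dyson vector of $\mathbf p$ is $\mathbf p-(1,1,0,0)=\alpha\mathbf S_X+\beta\mathbf S_Y+\gamma\mathbf 1+\delta\mathbf e_{23}$, then $\mathbf p$ is strictly firm if and only if $-\delta>\max(\alpha,(1-2P)\alpha)$.
   Context: Iterated Prisoner's Dilemma with normalized payoffs $T=1>R>P>S=0$, $2R>1$; outcomes ordered $cc,cd,dc,dd$ (first letter X's play, second Y's; $c$ = cooperate, $d$ = defect); payoff vectors $\mathbf S_X=(R,0,1,P)$, $\mathbf S_Y=(R,1,0,P)$, $\mathbf 1=(1,1,1,1)$, $\mathbf e_{23}=(0,1,1,0)$. A memory-one strategy for X is $\mathbf p\in[0,1]^4$, $p_i$ the probability X plays $c$ after the $i$-th outcome; it is firm if $p_4=0$. A strategy pattern for Y is any (possibly randomized, history-dependent) rule for Y's play. With $\mathbf v^n$ the distribution of the outcome of round $n$, a limit distribution is any limit point $\mathbf v=(v_1,\dots,v_4)$ of the Cesàro averages $\frac1n\sum_{k\le n}\mathbf v^k$, with $s_X=\langle\mathbf v\cdot\mathbf S_X\rangle$, $s_Y=\langle\mathbf v\cdot\mathbf S_Y\rangle$. $\mathbf p$ is strictly firm if it is firm and, for every strategy pattern of Y and every associated limit distribution,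 $s_Y\ge P$ implies $v_4=1$ (and so $s_Y=s_X=P$). *)

theory Defs
  imports Complex_Main
begin

text \<open>Outcomes of a single round, ordered cc, cd, dc, dd (X's play first).\<close>
datatype outcome = CC | CD | DC | DD

text \<open>Payoff vectors with normalized payoffs T = 1, S = 0.\<close>
definition S_X :: "real \<Rightarrow> real \<Rightarrow> outcome \<Rightarrow> real" where
  "S_X R P w = (case w of CC \<Rightarrow> R | CD \<Rightarrow> 0 | DC \<Rightarrow> 1 | DD \<Rightarrow> P)"

definition S_Y :: "real \<Rightarrow> real \<Rightarrow> outcome \<Rightarrow> real" where
  "S_Y R P w = (case w of CC \<Rightarrow> R | CD \<Rightarrow> 1 | DC \<Rightarrow> 0 | DD \<Rightarrow> P)"

definition e23 :: "outcome \<Rightarrow> real" where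
  "e23 w = (case w of CC \<Rightarrow> 0 | CD \<Rightarrow> 1 | DC \<Rightarrow> 1 | DD \<Rightarrow> 0)"

definition e12 :: "outcome \<Rightarrow> real" where
  "e12 w = (case w of CC \<Rightarrow> 1 | CD \<Rightarrow> 1 | DC \<Rightarrow> 0 | DD \<Rightarrow> 0)"

text \<open>A memory-one strategy for X: probability of cooperating after each outcome.\<close>
definition memory_one :: "(outcome \<Rightarrow> real) \<Rightarrow> bool" where
  "memory_one p \<longleftrightarrow> (\<forall>w. 0 \<le> p w \<and> p w \<le> 1)"

definition firm :: "(outcome \<Rightarrow> real) \<Rightarrow> bool" where
  "firm p \<longleftrightarrow> p DD = 0"

text \<open>A strategy pattern for Y (behavioural form): given the history of outcomes so far,
  the probability that Y cooperates in the next round.\<close>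
definition strategy_pattern :: "(outcome list \<Rightarrow> real) \<Rightarrow> bool" where
  "strategy_pattern q \<longleftrightarrow> (\<forall>h. 0 \<le> q h \<and> q h \<le> 1)"

definition outcome_prob :: "real \<Rightarrow> real \<Rightarrow> outcome \<Rightarrow> real" where
  "outcome_prob x y w = (case w of CC \<Rightarrow> x * y | CD \<Rightarrow> x * (1 - y)
                                  | DC \<Rightarrow> (1 - x) * y | DD \<Rightarrow> (1 - x) * (1 - y))"

definition x_coop :: "real \<Rightarrow> (outcome \<Rightarrow> real) \<Rightarrow> outcome list \<Rightarrow> real" where
  "x_coop x0 p h = (if h = [] then x0 else p (last h))"

lemma UNIV_outcome: "(UNIV :: outcome set) = {CC, CD, DC, DD}"
  using outcome.exhaust by auto

instance outcome :: finite
  by standard (simp add: UNIV_outcome)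

text \<open>Probability of a finite history h (chronological list of outcomes).\<close>
definition hist_prob :: "real \<Rightarrow> (outcome \<Rightarrow> real) \<Rightarrow> (outcome list \<Rightarrow> real) \<Rightarrow> outcome list \<Rightarrow> real" where
  "hist_prob x0 p q h =
     (\<Prod>k<length h. outcome_prob (x_coop x0 p (take k h)) (q (take k h)) (h ! k))"

text \<open>Distribution of the outcome of round n+1 (rounds counted from 0 here).\<close>
definition round_dist :: "real \<Rightarrow> (outcome \<Rightarrow> real) \<Rightarrow> (outcome list \<Rightarrow> real) \<Rightarrow> nat \<Rightarrow> outcome \<Rightarrow> real" where
  "round_dist x0 p q n w =
     (\<Sum>h\<in>{h :: outcome list. length h = n}.
        hist_prob x0 p q h * outcome_prob (x_coop x0 p h) (q h) w)"

definition cesaro :: "real \<Rightarrow> (outcome \<Rightarrow> real) \<Rightarrow> (outcome list \<Rightarrow> real) \<Rightarrow> nat \<Rightarrow> outcome \<Rightarrow> real" where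
  "cesaro x0 p q n w = (\<Sum>k<n. round_dist x0 p q k w) / real n"

definition limit_distribution ::
  "real \<Rightarrow> (outcome \<Rightarrow> real) \<Rightarrow> (outcome list \<Rightarrow> real) \<Rightarrow> (outcome \<Rightarrow> real) \<Rightarrow> bool" where
  "limit_distribution x0 p q v \<longleftrightarrow>
     (\<exists>r. strict_mono r \<and> (\<forall>w. (\<lambda>k. cesaro x0 p q (r k) w) \<longlonglongrightarrow> v w))"

definition payoff :: "(outcome \<Rightarrow> real) \<Rightarrow> (outcome \<Rightarrow> real) \<Rightarrow> real" where
  "payoff v S = (\<Sum>w\<in>UNIV. v w * S w)"

definition strictly_firm :: "real \<Rightarrow> real \<Rightarrow> (outcome \<Rightarrow> real) \<Rightarrow> bool" where
  "strictly_firm R P p \<longleftrightarrow> firm p \<and>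
     (\<forall>x0 q v. 0 \<le> x0 \<and> x0 \<le> 1 \<longrightarrow> strategy_pattern q \<longrightarrow> limit_distribution x0 p q v \<longrightarrow>
        payoff v (S_Y R P) \<ge> P \<longrightarrow> v DD = 1)"

end

theory Submission
  imports Defs "HOL-Analysis.Analysis"
begin

definition e13 :: "outcome \<Rightarrow> real" where
  "e13 w = (case w of CC \<Rightarrow> 1 | CD \<Rightarrow> 0 | DC \<Rightarrow> 1 | DD \<Rightarrow> 0)"

lemma sum_outcome: "(\<Sum>w\<in>UNIV. f w) = f CC + f CD + f DC + f DD"
  by (simp add: UNIV_outcome add.assoc)

lemma op_sum: "(\<Sum>w\<in>UNIV. outcome_prob x y w) = 1"
  by (simp add: sum_outcome outcome_prob_def algebra_simps)
lemma op_e12: "(\<Sum>w\<in>UNIV. outcome_prob x y w * e12 w) = x"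
  by (simp add: sum_outcome outcome_prob_def e12_def algebra_simps)
lemma op_e13: "(\<Sum>w\<in>UNIV. outcome_prob x y w * e13 w) = y"
  by (simp add: sum_outcome outcome_prob_def e13_def algebra_simps)
lemma op_nonneg: "0 \<le> x \<Longrightarrow> x \<le> 1 \<Longrightarrow> 0 \<le> y \<Longrightarrow> y \<le> 1 \<Longrightarrow> 0 \<le> outcome_prob x y w"
  by (cases w) (simp_all add: outcome_prob_def)

lemma finite_len: "finite {h::outcome list. length h = n}"
  using finite_lists_length_eq[of "UNIV::outcome set" n] by simp

lemma len_Suc_image: "{h::'a list. length h = Suc n} = (\<lambda>(h,w). h @ [w]) ` ({h. length h = n} \<times> UNIV)"
proof
  show "{h::'a list. length h = Suc n} \<subseteq> (\<lambda>(h,w). h @ [w]) ` ({h. length h = n} \<times> UNIV)"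
  proof
    fix h :: "'a list" assume "h \<in> {h. length h = Suc n}"
    then have "length h = Suc n" by simp
    then have "h \<noteq> []" by auto
    then have "h = butlast h @ [last h]" by simp
    moreover have "length (butlast h) = n" using \<open>length h = Suc n\<close> by simp
    ultimately show "h \<in> (\<lambda>(h,w). h @ [w]) ` ({h. length h = n} \<times> UNIV)"
      by (metis (mono_tags, lifting) SigmaI UNIV_I case_prod_conv image_eqI mem_Collect_eq)
  qed
qed auto

lemma sum_len_Suc: "(\<Sum>h\<in>{h::outcome list. length h = Suc n}. g h)
   = (\<Sum>h\<in>{h. length h = n}. \<Sum>w\<in>UNIV. g (h @ [w]))"
proof -
  have inj: "inj_on (\<lambda>(h,w). h @ [w]) ({h::outcome list. length h = n} \<times> UNIV)"
    by (auto simp: inj_on_def)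
  have "(\<Sum>h\<in>{h::outcome list. length h = Suc n}. g h)
      = (\<Sum>x\<in>{h::outcome list. length h = n} \<times> UNIV. g ((\<lambda>(h,w). h@[w]) x))"
    by (subst len_Suc_image, subst sum.reindex[OF inj]) simp
  also have "\<dots> = (\<Sum>h\<in>{h. length h = n}. \<Sum>w\<in>UNIV. g (h @ [w]))"
    by (simp add: sum.cartesian_product split_def)
  finally show ?thesis .
qed

lemma hist_prob_snoc: "hist_prob x0 p q (h @ [w]) = hist_prob x0 p q h * outcome_prob (x_coop x0 p h) (q h) w"
proof -
  have "(\<Prod>k<length h. outcome_prob (x_coop x0 p (take k (h@[w]))) (q (take k (h@[w]))) ((h@[w]) ! k))
      = (\<Prod>k<length h. outcome_prob (x_coop x0 p (take k h)) (q (take k h)) (h ! k))"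
    by (rule prod.cong) (auto simp: nth_append)
  then show ?thesis by (simp add: hist_prob_def)
qed

locale game =
  fixes x0 :: real and p :: "outcome \<Rightarrow> real" and q :: "outcome list \<Rightarrow> real"
  assumes x0: "0 \<le> x0" "x0 \<le> 1" and pm: "memory_one p" and qs: "strategy_pattern q"
begin

abbreviation "rd \<equiv> round_dist x0 p q"
abbreviation "H n \<equiv> {h::outcome list. length h = n}"
abbreviation "hp \<equiv> hist_prob x0 p q"

lemma xc_bnd: "0 \<le> x_coop x0 p h" "x_coop x0 p h \<le> 1"
  using x0 pm by (auto simp: x_coop_def memory_one_def)
lemma q_bnd: "0 \<le> q h" "q h \<le> 1"
  using qs by (auto simp: strategy_pattern_def)

lemma hp_nonneg: "0 \<le> hp h"
  unfolding hist_prob_def by (rule prod_nonneg) (auto intro!: op_nonneg xc_bnd q_bnd)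

lemma rd_nonneg: "0 \<le> rd n w"
  unfolding round_dist_def by (auto intro!: sum_nonneg mult_nonneg_nonneg hp_nonneg op_nonneg xc_bnd q_bnd)

lemma G0: "(\<Sum>w\<in>UNIV. rd n w * f w) = (\<Sum>h\<in>H n. hp h * (\<Sum>w\<in>UNIV. outcome_prob (x_coop x0 p h) (q h) w * f w))"
  unfolding round_dist_def
  by (simp add: sum_distrib_right sum_distrib_left mult.assoc sum.swap[where A=UNIV])

lemma G1: "(\<Sum>w\<in>UNIV. rd n w * f w) = (\<Sum>h\<in>H (Suc n). hp h * f (last h))"
  by (simp add: G0 sum_len_Suc hist_prob_snoc sum_distrib_left mult.assoc)

lemma T_one: "(\<Sum>h\<in>H n. hp h) = 1"
proof (induction n)
  case 0
  have "H 0 = {[]}" by auto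
  then show ?case by (simp add: hist_prob_def)
next
  case (Suc n)
  have "(\<Sum>h\<in>H (Suc n). hp h) = (\<Sum>w\<in>UNIV. rd n w * 1)" using G1[of n "\<lambda>_. 1"] by simp
  also have "\<dots> = (\<Sum>h\<in>H n. hp h)" using G0[of n "\<lambda>_. 1"] by (simp add: op_sum)
  finally show ?case using Suc by simp
qed

lemma rd_sum: "(\<Sum>w\<in>UNIV. rd n w) = 1"
  using G0[of n "\<lambda>_. 1"] by (simp add: op_sum T_one)

lemma Xstep: "(\<Sum>w\<in>UNIV. rd (Suc n) w * e12 w) = (\<Sum>w\<in>UNIV. rd n w * p w)"
proof -
  have "(\<Sum>w\<in>UNIV. rd (Suc n) w * e12 w) = (\<Sum>h\<in>H (Suc n). hp h * x_coop x0 p h)"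
    by (simp add: G0 op_e12)
  also have "\<dots> = (\<Sum>h\<in>H (Suc n). hp h * p (last h))"
    by (rule sum.cong) (auto simp: x_coop_def)
  finally show ?thesis by (simp add: G1)
qed

lemma Ystep: "(\<Sum>w\<in>UNIV. rd n w * e13 w) = (\<Sum>h\<in>H n. hp h * q h)"
  by (simp add: G0 op_e13)


lemma rd_le1: "rd n w \<le> 1"
proof -
  have "rd n CC + rd n CD + rd n DC + rd n DD = 1" using rd_sum[of n] by (simp add: sum_outcome)
  moreover have "0 \<le> rd n CC" "0 \<le> rd n CD" "0 \<le> rd n DC" "0 \<le> rd n DD" by (rule rd_nonneg)+
  ultimately show ?thesis by (cases w) auto
qed

lemma ces_bnd: "0 \<le> cesaro x0 p q n w" "cesaro x0 p q n w \<le> 1"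
proof -
  show "0 \<le> cesaro x0 p q n w" unfolding cesaro_def by (intro divide_nonneg_nonneg sum_nonneg rd_nonneg) simp
  have "(\<Sum>k<n. rd k w) \<le> (\<Sum>k<n. 1)" by (rule sum_mono) (rule rd_le1)
  then have "(\<Sum>k<n. rd k w) \<le> real n" by simp
  then show "cesaro x0 p q n w \<le> 1" unfolding cesaro_def
    by (cases "n = 0") (simp_all add: divide_le_eq)
qed

lemma ces_sum: "(\<Sum>w\<in>UNIV. cesaro x0 p q n w * g w) = (\<Sum>k<n. \<Sum>w\<in>UNIV. rd k w * g w) / real n"
  unfolding cesaro_def by (simp add: sum_divide_distrib sum_distrib_right sum.swap[where A=UNIV])

lemma lim_lemma:
  assumes lim: "limit_distribution x0 p q v" and t: "(\<lambda>n. \<Sum>w\<in>UNIV. cesaro x0 p q n w * g w) \<longlonglongrightarrow> L"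
  shows "(\<Sum>w\<in>UNIV. v w * g w) = L"
proof -
  from lim obtain r where r: "strict_mono r" and c: "\<And>w. (\<lambda>k. cesaro x0 p q (r k) w) \<longlonglongrightarrow> v w"
    unfolding limit_distribution_def by blast
  have "(\<lambda>k. \<Sum>w\<in>UNIV. cesaro x0 p q (r k) w * g w) \<longlonglongrightarrow> (\<Sum>w\<in>UNIV. v w * g w)"
    by (intro tendsto_intros c)
  moreover have "(\<lambda>k. \<Sum>w\<in>UNIV. cesaro x0 p q (r k) w * g w) \<longlonglongrightarrow> L"
    using LIMSEQ_subseq_LIMSEQ[OF t r] by (simp add: o_def)
  ultimately show ?thesis by (rule LIMSEQ_unique)
qed

lemma akin_generic:
  assumes lim: "limit_distribution x0 p q v"
    and step: "\<And>k. (\<Sum>w\<in>UNIV. rd k w * g w) = c (Suc k) - c k"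
    and bnd: "\<And>k. \<bar>c k\<bar> \<le> B"
  shows "(\<Sum>w\<in>UNIV. v w * g w) = 0"
proof (rule lim_lemma[OF lim])
  have eq: "(\<Sum>w\<in>UNIV. cesaro x0 p q n w * g w) = (c n - c 0) / real n" for n
    by (simp add: ces_sum step sum_lessThan_telescope)
  have "(\<lambda>n. (c n - c 0) / real n) \<longlonglongrightarrow> 0"
  proof (rule Lim_null_comparison)
    show "\<forall>\<^sub>F n in sequentially. norm ((c n - c 0) / real n) \<le> (2*B) * inverse (real n)"
    proof (rule always_eventually, rule allI)
      fix n
      have "\<bar>c n - c 0\<bar> \<le> 2*B" using bnd[of n] bnd[of 0] by linarith
      then have "\<bar>c n - c 0\<bar> / real n \<le> 2*B / real n" by (rule divide_right_mono) simp
      then show "norm ((c n - c 0) / real n) \<le> (2*B) * inverse (real n)"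
        by (simp add: abs_mult divide_inverse)
    qed
    show "(\<lambda>n. (2*B) * inverse (real n)) \<longlonglongrightarrow> 0"
      using tendsto_mult[OF tendsto_const lim_inverse_n, of "2*B"] by simp
  qed
  then show "(\<lambda>n. \<Sum>w\<in>UNIV. cesaro x0 p q n w * g w) \<longlonglongrightarrow> 0" by (simp add: eq)
qed

lemma v_nonneg:
  assumes lim: "limit_distribution x0 p q v" shows "0 \<le> v w"
proof -
  from lim obtain r where c: "(\<lambda>k. cesaro x0 p q (r k) w) \<longlonglongrightarrow> v w"
    unfolding limit_distribution_def by blast
  show ?thesis by (rule LIMSEQ_le_const[OF c]) (auto intro: ces_bnd)
qed

lemma v_sum:
  assumes lim: "limit_distribution x0 p q v" shows "v CC + v CD + v DC + v DD = 1"
proof -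
  have "(\<lambda>n. \<Sum>w\<in>UNIV. cesaro x0 p q n w * 1) \<longlonglongrightarrow> 1"
  proof (rule Lim_transform_eventually[OF tendsto_const])
    show "\<forall>\<^sub>F n in sequentially. 1 = (\<Sum>w\<in>UNIV. cesaro x0 p q n w * 1)"
    proof (rule eventually_sequentiallyI[of 1])
      fix n :: nat assume "1 \<le> n"
      then show "1 = (\<Sum>w\<in>UNIV. cesaro x0 p q n w * 1)"
        using ces_sum[of n "\<lambda>_. 1"] by (simp add: rd_sum)
    qed
  qed
  from lim_lemma[OF lim this] show ?thesis by (simp add: sum_outcome)
qed

lemma exists_limit: "\<exists>v. limit_distribution x0 p q v"
proof -
  define f where "f n = ((cesaro x0 p q n CC, cesaro x0 p q n CD), (cesaro x0 p q n DC, cesaro x0 p q n DD))" for n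
  have "range f \<subseteq> ({0..1} \<times> {0..1}) \<times> ({0..1} \<times> {0..1})"
    by (auto simp: f_def ces_bnd)
  then have "bounded (range f)"
    by (rule bounded_subset[rotated]) (intro bounded_Times bounded_closed_interval)
  from bounded_imp_convergent_subsequence[OF this] obtain l r where
    r: "strict_mono r" and t: "(f \<circ> r) \<longlonglongrightarrow> l" by blast
  define v where "v w = (case w of CC \<Rightarrow> fst (fst l) | CD \<Rightarrow> snd (fst l) | DC \<Rightarrow> fst (snd l) | DD \<Rightarrow> snd (snd l))" for w
  have t1: "(\<lambda>k. fst (fst ((f \<circ> r) k))) \<longlonglongrightarrow> fst (fst l)" "(\<lambda>k. snd (fst ((f \<circ> r) k))) \<longlonglongrightarrow> snd (fst l)"
     "(\<lambda>k. fst (snd ((f \<circ> r) k))) \<longlonglongrightarrow> fst (snd l)" "(\<lambda>k. snd (snd ((f \<circ> r) k))) \<longlonglongrightarrow> snd (snd l)"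
    by (intro tendsto_intros t)+
  have "(\<lambda>k. cesaro x0 p q (r k) w) \<longlonglongrightarrow> v w" for w
    using t1 by (cases w) (simp_all add: f_def v_def o_def)
  then show ?thesis unfolding limit_distribution_def using r by blast
qed

lemma akinX: assumes lim: "limit_distribution x0 p q v"
  shows "(\<Sum>w\<in>UNIV. v w * (p w - e12 w)) = 0"
proof (rule akin_generic[OF lim, where c = "\<lambda>k. \<Sum>w\<in>UNIV. rd k w * e12 w" and B=1])
  show "(\<Sum>w\<in>UNIV. rd k w * (p w - e12 w)) = (\<Sum>w\<in>UNIV. rd (Suc k) w * e12 w) - (\<Sum>w\<in>UNIV. rd k w * e12 w)" for k
    by (simp add: Xstep right_diff_distrib sum_subtractf)
  show "\<bar>\<Sum>w\<in>UNIV. rd k w * e12 w\<bar> \<le> 1" for k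
    using rd_sum[of k] rd_nonneg[of k CC] rd_nonneg[of k CD] rd_nonneg[of k DC] rd_nonneg[of k DD]
    by (simp add: sum_outcome e12_def)
qed

lemma akinY: assumes lim: "limit_distribution x0 p q v" and qm: "\<And>h. h \<noteq> [] \<Longrightarrow> q h = qm (last h)"
  shows "(\<Sum>w\<in>UNIV. v w * (qm w - e13 w)) = 0"
proof (rule akin_generic[OF lim, where c = "\<lambda>k. \<Sum>w\<in>UNIV. rd k w * e13 w" and B=1])
  have st: "(\<Sum>w\<in>UNIV. rd k w * qm w) = (\<Sum>w\<in>UNIV. rd (Suc k) w * e13 w)" for k
  proof -
    have "(\<Sum>w\<in>UNIV. rd k w * qm w) = (\<Sum>h\<in>H (Suc k). hp h * qm (last h))" by (rule G1)
    also have "\<dots> = (\<Sum>h\<in>H (Suc k). hp h * q h)" 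
    proof (rule sum.cong)
      fix h assume "h \<in> H (Suc k)"
      then have "h \<noteq> []" by auto
      then show "hp h * qm (last h) = hp h * q h" by (simp add: qm)
    qed simp
    finally show ?thesis by (simp add: Ystep)
  qed
  show "(\<Sum>w\<in>UNIV. rd k w * (qm w - e13 w)) = (\<Sum>w\<in>UNIV. rd (Suc k) w * e13 w) - (\<Sum>w\<in>UNIV. rd k w * e13 w)" for k
    by (simp add: st right_diff_distrib sum_subtractf)
  show "\<bar>\<Sum>w\<in>UNIV. rd k w * e13 w\<bar> \<le> 1" for k
    using rd_sum[of k] rd_nonneg[of k CC] rd_nonneg[of k CD] rd_nonneg[of k DC] rd_nonneg[of k DD]
    by (simp add: sum_outcome e13_def)
qed

lemma zero_lemma: assumes lim: "limit_distribution x0 p q v" and z: "\<And>k. (\<Sum>w\<in>UNIV. rd k w * g w) = 0"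
  shows "(\<Sum>w\<in>UNIV. v w * g w) = 0"
  by (rule akin_generic[OF lim, where c = "\<lambda>_. 0" and B = 0]) (simp_all add: z)

lemma rd0: "rd 0 w = outcome_prob x0 (q []) w"
proof -
  have "H 0 = {[]}" by auto
  then show ?thesis by (simp add: round_dist_def hist_prob_def x_coop_def)
qed

lemma v_facts: assumes lim: "limit_distribution x0 p q v"
  shows "0 \<le> v CC" "0 \<le> v CD" "0 \<le> v DC" "0 \<le> v DD" "v CC + v CD + v DC + v DD = 1"
    "v CC * (p CC - 1) + v CD * (p CD - 1) + v DC * p DC + v DD * p DD = 0"
  using v_nonneg[OF lim] v_sum[OF lim] akinX[OF lim] by (simp_all add: sum_outcome e12_def)

end
lemma suff_arith:
  fixes a b c d P R p1 p2 p3 :: real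
  assumes "0 < P" "P < R" "R < 1" "0 \<le> a" "0 \<le> b" "0 \<le> c" "0 \<le> d" "a+b+c+d = 1"
    and E: "a*(p1-1)+b*(p2-1)+c*p3 = 0" and "0 \<le> p3"
    and hA: "p3*(R-P) < P*(1-p1)" and hB: "p3*(1-P) < P*(1-p2)"
    and S: "a*R + b + d*P \<ge> P"
  shows "d = 1"
proof -
  have "P*(a+b+c+d) = P" using assms(8) by simp
  then have S': "(R-P)*a + (1-P)*b \<ge> P*c" using S by (simp add: algebra_simps)
  have m: "p3*((R-P)*a + (1-P)*b) \<ge> p3*(P*c)" using mult_left_mono[OF S' \<open>0 \<le> p3\<close>] .
  have E': "a*(1-p1)+b*(1-p2) = c*p3" using E by (simp add: algebra_simps)
  have "a*(P*(1-p1) - p3*(R-P)) + b*(P*(1-p2) - p3*(1-P)) = P*(a*(1-p1)+b*(1-p2)) - p3*((R-P)*a + (1-P)*b)"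
    by (simp add: algebra_simps)
  also have "\<dots> = p3*(P*c) - p3*((R-P)*a + (1-P)*b)" by (simp only: E') (simp add: algebra_simps)
  finally have key: "a*(P*(1-p1) - p3*(R-P)) + b*(P*(1-p2) - p3*(1-P)) \<le> 0" using m by linarith
  have X: "P*(1-p1) - p3*(R-P) > 0" "P*(1-p2) - p3*(1-P) > 0" using hA hB by linarith+
  have t1: "a*(P*(1-p1) - p3*(R-P)) \<ge> 0" "b*(P*(1-p2) - p3*(1-P)) \<ge> 0"
    using X assms(4,5) by simp_all
  then have "a*(P*(1-p1) - p3*(R-P)) = 0" "b*(P*(1-p2) - p3*(1-P)) = 0" using key by linarith+
  then have a0: "a = 0" and b0: "b = 0" using X by simp_all
  have "P*c \<le> 0" using S' a0 b0 by simp
  then have "c = 0" using \<open>0 < P\<close> \<open>0 \<le> c\<close> by (simp add: mult_le_0_iff)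
  then show ?thesis using a0 b0 assms(8) by simp
qed

lemma condA_iff:
  fixes P R :: real and p :: "outcome \<Rightarrow> real"
  assumes "P < R" shows "p DC < P / (R - P) * (1 - p CC) \<longleftrightarrow> p DC*(R-P) < P*(1 - p CC)"
proof -
  have pos: "R - P > 0" using assms by simp
  have d: "P / (R - P) * (1 - p CC) = P*(1 - p CC)/(R-P)" by simp
  show ?thesis by (simp only: d pos_less_divide_eq[OF pos])
qed

lemma condB_iff:
  fixes P :: real and p :: "outcome \<Rightarrow> real"
  assumes "P < 1" shows "p DC < P / (1 - P) * (1 - p CD) \<longleftrightarrow> p DC*(1-P) < P*(1 - p CD)"
proof -
  have pos: "1 - P > 0" using assms by simp
  have d: "P / (1 - P) * (1 - p CD) = P*(1 - p CD)/(1-P)" by simp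
  show ?thesis by (simp only: d pos_less_divide_eq[OF pos])
qed

lemma payoff_Y: "payoff v (S_Y R P) = v CC * R + v CD + v DD * P"
  by (simp add: payoff_def S_Y_def sum_outcome)

lemma sufficiency:
  assumes "0 < P" "P < R" "R < 1" "memory_one p" "firm p"
    and A: "p DC < P / (R - P) * (1 - p CC)" and B: "p DC < P / (1 - P) * (1 - p CD)"
  shows "strictly_firm R P p"
  unfolding strictly_firm_def
proof (intro conjI allI impI)
  show "firm p" by fact
  fix x0 q v assume x: "0 \<le> x0 \<and> x0 \<le> 1" and qs: "strategy_pattern q" and lim: "limit_distribution x0 p q v"
    and pay: "P \<le> payoff v (S_Y R P)"
  interpret game x0 p q using x qs assms(4) by unfold_locales auto
  note vf = v_facts[OF lim]
  have hA: "p DC*(R-P) < P*(1-p CC)" using A assms condA_iff by blast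
  have hB: "p DC*(1-P) < P*(1-p CD)" using B assms condB_iff[of P p] by auto
  have p4: "p DD = 0" using assms(5) by (simp add: firm_def)
  have p3: "0 \<le> p DC" using assms(4) by (simp add: memory_one_def)
  show "v DD = 1"
    by (rule suff_arith[of P R "v CC" "v CD" "v DC" "v DD" "p CC" "p CD" "p DC"])
       (use vf p4 p3 hA hB pay assms(1-3) in \<open>simp_all add: payoff_Y\<close>)
qed

lemma nec_A:
  assumes "0 < P" "P < R" "R < 1" "memory_one p" "firm p" "0 < p DC"
    and nA: "p DC*(R-P) \<ge> P*(1 - p CC)"
  shows "\<not> strictly_firm R P p"
proof
  assume sf: "strictly_firm R P p"
  interpret game 1 p "\<lambda>_. 1" using assms(4) by unfold_locales (auto simp: strategy_pattern_def)
  obtain v where lim: "limit_distribution 1 p (\<lambda>_. 1) v" using exists_limit by blast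
  note vf = v_facts[OF lim]
  have z: "(\<Sum>w\<in>UNIV. v w * (1 - e13 w)) = 0"
  proof (rule zero_lemma[OF lim])
    fix k show "(\<Sum>w\<in>UNIV. rd k w * (1 - e13 w)) = 0"
      using Ystep[of k] T_one[of k] rd_sum[of k] by (simp add: right_diff_distrib sum_subtractf)
  qed
  then have "v CD + v DD = 0" by (simp add: sum_outcome e13_def)
  then have b0: "v CD = 0" and d0: "v DD = 0" using vf by linarith+
  have p4: "p DD = 0" using assms(5) by (simp add: firm_def)
  have E: "v CC * (1 - p CC) = v DC * p DC" using vf(6) b0 d0 p4 by (simp add: algebra_simps)
  have "p DC * (P * v DC) = P * (v DC * p DC)" by (simp add: ac_simps)
  also have "\<dots> = P * (v CC * (1 - p CC))" by (simp only: E)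
  also have "\<dots> = v CC * (P * (1 - p CC))" by (simp add: ac_simps)
  also have "\<dots> \<le> v CC * (p DC*(R-P))" using nA vf(1) by (rule mult_left_mono)
  also have "\<dots> = p DC * ((R-P) * v CC)" by (simp add: algebra_simps)
  finally have "P * v DC \<le> (R-P) * v CC" using assms(6) by (rule mult_left_le_imp_le) 
  moreover have "v CC + v DC = 1" using vf(5) b0 d0 by simp
  then have "P = P * v CC + P * v DC" by (metis distrib_left mult_1_right)
  ultimately have "P \<le> payoff v (S_Y R P)" using b0 d0 by (simp add: payoff_Y algebra_simps)
  then have "v DD = 1" using sf lim qs x0 unfolding strictly_firm_def by blast
  with d0 show False by simp
qed

lemma nec_B:
  assumes "0 < P" "P < R" "R < 1" "memory_one p" "firm p" "0 < p DC"
    and nB: "p DC*(1-P) \<ge> P*(1 - p CD)"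
  shows "\<not> strictly_firm R P p"
proof
  assume sf: "strictly_firm R P p"
  define qB where "qB h = (if h = [] then 0 else if last h = DD then 1 else (0::real))" for h
  interpret game 1 p qB using assms(4) by unfold_locales (auto simp: strategy_pattern_def qB_def)
  obtain v where lim: "limit_distribution 1 p qB v" using exists_limit by blast
  note vf = v_facts[OF lim]
  have p4: "p DD = 0" using assms(5) by (simp add: firm_def)
  have z: "(\<Sum>w\<in>UNIV. v w * (if w = CC then 1 else 0)) = 0"
  proof (rule zero_lemma[OF lim])
    fix k
    have "(\<Sum>w\<in>UNIV. rd k w * (if w = CC then 1 else 0)) = rd k CC" by (simp add: sum_outcome)
    also have "\<dots> = 0" unfolding round_dist_def
    proof (rule sum.neutral, rule ballI)
      fix h show "hp h * outcome_prob (x_coop 1 p h) (qB h) CC = 0"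
        using p4 by (auto simp: outcome_prob_def qB_def x_coop_def)
    qed
    finally show "(\<Sum>w\<in>UNIV. rd k w * (if w = CC then 1 else 0)) = 0" .
  qed
  then have a0: "v CC = 0" by (simp add: sum_outcome)
  have "(\<Sum>w\<in>UNIV. v w * ((\<lambda>w. if w = DD then 1 else 0) w - e13 w)) = 0"
    by (rule akinY[OF lim]) (simp add: qB_def)
  then have cd: "v DD = v DC" using a0 by (simp add: sum_outcome e13_def)
  have E: "v CD * (1 - p CD) = v DC * p DC" using vf(6) a0 p4 by (simp add: algebra_simps)
  have "p DC * (P * v DC) = P * (v DC * p DC)" by (simp add: ac_simps)
  also have "\<dots> = P * (v CD * (1 - p CD))" by (simp only: E)
  also have "\<dots> = v CD * (P * (1 - p CD))" by (simp add: ac_simps)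
  also have "\<dots> \<le> v CD * (p DC*(1-P))" using nB vf(2) by (rule mult_left_mono)
  also have "\<dots> = p DC * ((1-P) * v CD)" by (simp add: algebra_simps)
  finally have "P * v DC \<le> (1-P) * v CD" using assms(6) by (rule mult_left_le_imp_le) 
  moreover have "v CD + 2 * v DC = 1" using vf(5) a0 cd by simp
  then have "P = P * v CD + 2 * (P * v DC)" by (metis distrib_left mult_1_right mult.left_commute)
  ultimately have "P \<le> payoff v (S_Y R P)" using a0 cd by (simp add: payoff_Y algebra_simps)
  then have "v DD = 1" using sf lim qs x0 unfolding strictly_firm_def by blast
  with cd a0 vf show False by linarith
qed

lemma nec_C:
  assumes "0 < P" "P < R" "R < 1" "memory_one p" "firm p" "p CC = 1"
  shows "\<not> strictly_firm R P p"
proof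
  assume sf: "strictly_firm R P p"
  interpret game 1 p "\<lambda>_. 1" using assms(4) by unfold_locales (auto simp: strategy_pattern_def)
  obtain v where lim: "limit_distribution 1 p (\<lambda>_. 1) v" using exists_limit by blast
  note vf = v_facts[OF lim]
  have p4: "p DD = 0" using assms(5) by (simp add: firm_def)
  have yk: "rd k CD = 0 \<and> rd k DD = 0" for k
  proof -
    have "rd k CC + rd k DC = 1" using Ystep[of k] T_one[of k] by (simp add: sum_outcome e13_def)
    then show ?thesis using rd_sum[of k] rd_nonneg[of k CD] rd_nonneg[of k DD] by (simp add: sum_outcome)
  qed
  have c1: "rd k CC = 1" for k
  proof (induction k)
    case 0 then show ?case by (simp add: rd0 outcome_prob_def)
  next
    case (Suc k)
    have "rd k DC = 0" using Suc rd_sum[of k] yk[of k] by (simp add: sum_outcome)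
    then show ?case using Xstep[of k] yk[of k] yk[of "Suc k"] Suc assms(6) p4
      by (simp add: sum_outcome e12_def)
  qed
  have "rd k DC = 0" for k using c1[of k] rd_sum[of k] yk[of k] by (simp add: sum_outcome)
  then have "(\<Sum>w\<in>UNIV. v w * (if w = DC then 1 else 0)) = 0"
    by (intro zero_lemma[OF lim]) (simp add: sum_outcome)
  then have c0: "v DC = 0" by (simp add: sum_outcome)
  have z: "(\<Sum>w\<in>UNIV. v w * (1 - e13 w)) = 0"
  proof (rule zero_lemma[OF lim])
    fix k show "(\<Sum>w\<in>UNIV. rd k w * (1 - e13 w)) = 0"
      using yk[of k] by (simp add: sum_outcome e13_def)
  qed
  then have "v CD + v DD = 0" by (simp add: sum_outcome e13_def)
  then have b0: "v CD = 0" and d0: "v DD = 0" using vf by linarith+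
  have "v CC = 1" using vf(5) b0 c0 d0 by simp
  then have "P \<le> payoff v (S_Y R P)" using b0 d0 assms by (simp add: payoff_Y)
  then have "v DD = 1" using sf lim qs x0 unfolding strictly_firm_def by blast
  with d0 show False by simp
qed

lemma nec_D:
  assumes "0 < P" "P < R" "R < 1" "memory_one p" "firm p" "p CD = 1"
  shows "\<not> strictly_firm R P p"
proof
  assume sf: "strictly_firm R P p"
  interpret game 1 p "\<lambda>_. 0" using assms(4) by unfold_locales (auto simp: strategy_pattern_def)
  obtain v where lim: "limit_distribution 1 p (\<lambda>_. 0) v" using exists_limit by blast
  note vf = v_facts[OF lim]
  have p4: "p DD = 0" using assms(5) by (simp add: firm_def)
  have yk: "rd k CC = 0 \<and> rd k DC = 0" for k
  proof -
    have "rd k CC + rd k DC = 0" using Ystep[of k] by (simp add: sum_outcome e13_def)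
    then show ?thesis using rd_nonneg[of k CC] rd_nonneg[of k DC] by simp
  qed
  have c1: "rd k CD = 1" for k
  proof (induction k)
    case 0 then show ?case by (simp add: rd0 outcome_prob_def)
  next
    case (Suc k)
    have "rd k DD = 0" using Suc rd_sum[of k] yk[of k] by (simp add: sum_outcome)
    then show ?case using Xstep[of k] yk[of k] yk[of "Suc k"] Suc assms(6) p4
      by (simp add: sum_outcome e12_def)
  qed
  have "rd k DD = 0" for k using c1[of k] rd_sum[of k] yk[of k] by (simp add: sum_outcome)
  then have "(\<Sum>w\<in>UNIV. v w * (if w = DD then 1 else 0)) = 0"
    by (intro zero_lemma[OF lim]) (simp add: sum_outcome)
  then have d0: "v DD = 0" by (simp add: sum_outcome)
  have z: "(\<Sum>w\<in>UNIV. v w * e13 w) = 0"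
    by (rule zero_lemma[OF lim]) (use yk in \<open>simp add: sum_outcome e13_def\<close>)
  then have "v CC + v DC = 0" by (simp add: sum_outcome e13_def)
  then have a0: "v CC = 0" and c0: "v DC = 0" using vf by linarith+
  have "v CD = 1" using vf(5) a0 c0 d0 by simp
  then have "P \<le> payoff v (S_Y R P)" using a0 d0 assms by (simp add: payoff_Y)
  then have "v DD = 1" using sf lim qs x0 unfolding strictly_firm_def by blast
  with d0 show False by simp
qed


theorem theorem5p3:
  fixes R P :: real and p :: "outcome \<Rightarrow> real"
  assumes "0 < P" and "P < R" and "R < 1" and "2 * R > 1"
    and "memory_one p" and "firm p"
  shows "(strictly_firm R P p \<longleftrightarrow>
            p DC < P / (R - P) * (1 - p CC) \<and> p DC < P / (1 - P) * (1 - p CD))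
       \<and> (\<forall>\<alpha> \<beta> \<gamma> \<delta> :: real.
            (\<forall>w. p w - e12 w = \<alpha> * S_X R P w + \<beta> * S_Y R P w + \<gamma> + \<delta> * e23 w) \<longrightarrow>
            (strictly_firm R P p \<longleftrightarrow> - \<delta> > max \<alpha> ((1 - 2 * P) * \<alpha>)))"
proof -
  have pb: "0 \<le> p DC" "p CC \<le> 1" "p CD \<le> 1" using assms(5) by (auto simp: memory_one_def)
  have p4: "p DD = 0" using assms(6) by (simp add: firm_def)
  have cA: "p DC < P / (R - P) * (1 - p CC) \<longleftrightarrow> p DC*(R-P) < P*(1 - p CC)"
    using assms(2) by (rule condA_iff)
  have cB: "p DC < P / (1 - P) * (1 - p CD) \<longleftrightarrow> p DC*(1-P) < P*(1 - p CD)"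
    using assms by (intro condB_iff) simp
  have part1: "strictly_firm R P p \<longleftrightarrow> p DC*(R-P) < P*(1 - p CC) \<and> p DC*(1-P) < P*(1 - p CD)"
  proof
    assume sf: "strictly_firm R P p"
    show "p DC*(R-P) < P*(1 - p CC) \<and> p DC*(1-P) < P*(1 - p CD)"
    proof (rule ccontr)
      assume "\<not> ?thesis"
      then consider (nA) "P*(1 - p CC) \<le> p DC*(R-P)" | (nB) "P*(1 - p CD) \<le> p DC*(1-P)" by linarith
      then show False
      proof cases
        case nA
        show False
        proof (cases "p DC = 0")
          case True
          then have "P*(1 - p CC) \<le> 0" using nA by simp
          then have "1 - p CC \<le> 0" using assms(1) by (simp add: mult_le_0_iff)
          then have "p CC = 1" using pb by simp
          then show False using nec_C[OF assms(1-3,5,6)] sf by blast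
        next
          case False
          then have "0 < p DC" using pb by simp
          then show False using nec_A[OF assms(1-3,5,6) _ nA] sf by blast
        qed
      next
        case nB
        show False
        proof (cases "p DC = 0")
          case True
          then have "P*(1 - p CD) \<le> 0" using nB by simp
          then have "1 - p CD \<le> 0" using assms(1) by (simp add: mult_le_0_iff)
          then have "p CD = 1" using pb by simp
          then show False using nec_D[OF assms(1-3,5,6)] sf by blast
        next
          case False
          then have "0 < p DC" using pb by simp
          then show False using nec_B[OF assms(1-3,5,6) _ nB] sf by blast
        qed
      qed
    qed
  next
    assume "p DC*(R-P) < P*(1 - p CC) \<and> p DC*(1-P) < P*(1 - p CD)"
    then show "strictly_firm R P p" using sufficiency[OF assms(1-3,5,6)] cA cB by blast
  qed
  show ?thesis
  proof (intro conjI allI impI)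
    show "strictly_firm R P p \<longleftrightarrow>
            p DC < P / (R - P) * (1 - p CC) \<and> p DC < P / (1 - P) * (1 - p CD)"
      using part1 cA cB by blast
  next
    fix \<alpha> \<beta> \<gamma> \<delta> :: real
    assume h: "\<forall>w. p w - e12 w = \<alpha> * S_X R P w + \<beta> * S_Y R P w + \<gamma> + \<delta> * e23 w"
    have h1: "p CC = 1 + \<alpha> * R + \<beta> * R + \<gamma>" using h[rule_format, of CC] by (simp add: S_X_def S_Y_def e12_def e23_def)
    have h2: "p CD = 1 + \<beta> + \<gamma> + \<delta>" using h[rule_format, of CD] by (simp add: S_X_def S_Y_def e12_def e23_def)
    have h3: "p DC = \<alpha> + \<gamma> + \<delta>" using h[rule_format, of DC] by (simp add: S_X_def S_Y_def e12_def e23_def)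
    have h4: "\<gamma> = - (\<alpha> * P + \<beta> * P)" using h[rule_format, of DD] p4 by (simp add: S_X_def S_Y_def e12_def e23_def)
    have iA: "p DC*(R-P) - P*(1 - p CC) = (\<alpha> + \<delta>) * (R - P)"
      unfolding h1 h3 h4 by (simp add: algebra_simps)
    have iB: "p DC*(1-P) - P*(1 - p CD) = ((1 - 2*P)*\<alpha> + \<delta>)"
      unfolding h2 h3 h4 by (simp add: algebra_simps)
    have eA: "p DC*(R-P) < P*(1 - p CC) \<longleftrightarrow> - \<delta> > \<alpha>"
    proof -
      have "p DC*(R-P) < P*(1 - p CC) \<longleftrightarrow> (\<alpha> + \<delta>) * (R - P) < 0" using iA by linarith
      also have "\<dots> \<longleftrightarrow> \<alpha> + \<delta> < 0" using assms(2) by (simp add: mult_less_0_iff)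
      finally show ?thesis by linarith
    qed
    have eB: "p DC*(1-P) < P*(1 - p CD) \<longleftrightarrow> - \<delta> > (1 - 2*P)*\<alpha>" using iB by linarith
    show "strictly_firm R P p \<longleftrightarrow> - \<delta> > max \<alpha> ((1 - 2 * P) * \<alpha>)"
      using part1 eA eB by simp
  qed
qed

end
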